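(* Let $N>4$ and $A\in C^1(\mathbb{R}^N,\mathbb{R}^N)\cap L^\infty(\mathbb{R}^N,\mathbb{R}^N)\cap L^r(\mathbb{R}^N,\mathbb{R}^N)$ for some $1<r<N$. Define $H_2(\mu,\xi)=\frac12\int_{\mathbb{R}^N}|A(x)|^2|z_{\mu,\xi}(x)|^2dx$ for $\mu>0$, $\xi\in\mathbb{R}^N$. Then $$\lim_{\mu+|\xi|\to+\infty}H_2(\mu,\xi)=0.$$
   Context: $\kappa_N=(N(N-2))^{(N-2)/4}$ and $z_{\mu,\xi}(x)=\kappa_N\mu^{(N-2)/2}(\mu^2+|x-\xi|^2)^{-(N-2)/2}$ for $\mu>0$, $\xi\in\mathbb{R}^N$. *)

theory Defs
  imports "HOL-Analysis.Analysis"
begin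

text \<open>Dimension N is CARD('n); points of R^N are vectors of type real^'n.\<close>

definition kappaN :: "nat \<Rightarrow> real" where
  "kappaN N = (real N * (real N - 2)) powr ((real N - 2) / 4)"

definition zbubble :: "real \<Rightarrow> real^'n \<Rightarrow> real^'n \<Rightarrow> real" where
  "zbubble \<mu> \<xi> x = (let N = CARD('n) in
      kappaN N * \<mu> powr ((real N - 2) / 2)
      * (\<mu>\<^sup>2 + (norm (x - \<xi>))\<^sup>2) powr (- (real N - 2) / 2))"

definition C1_on_UNIV :: "(real^'n \<Rightarrow> real^'n) \<Rightarrow> bool" where
  "C1_on_UNIV A \<longleftrightarrow> (\<exists>D :: real^'n \<Rightarrow> ((real^'n, real^'n) blinfun).
      (\<forall>x. (A has_derivative blinfun_apply (D x)) (at x)) \<and> continuous_on UNIV D)"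

definition H2 :: "(real^'n \<Rightarrow> real^'n) \<Rightarrow> real \<Rightarrow> real^'n \<Rightarrow> real" where
  "H2 A \<mu> \<xi> = (1/2) * (LINT x|lborel. (norm (A x))\<^sup>2 * (zbubble \<mu> \<xi> x)\<^sup>2)"

end

theory Submission
  imports Defs "HOL-Probability.Sinc_Integral"
begin

lemma zsq:
  fixes \<xi> x :: "real^'n"
  assumes mu: "\<mu> > 0"
  shows "(zbubble \<mu> \<xi> x)\<^sup>2 = (kappaN CARD('n))\<^sup>2 * (\<mu> / (\<mu>\<^sup>2 + (norm (x - \<xi>))\<^sup>2)) powr (real CARD('n) - 2)"
proof -
  define e where "e = (real CARD('n) - 2) / 2"
  define s where "s = \<mu>\<^sup>2 + (norm (x - \<xi>))\<^sup>2"
  have s: "s > 0" unfolding s_def using mu by (simp add: add_pos_nonneg)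
  have ee: "(- (real CARD('n) - 2) / 2) = - e" unfolding e_def by (simp add: field_simps)
  have z: "zbubble \<mu> \<xi> x = kappaN CARD('n) * \<mu> powr e * s powr (- e)"
    unfolding zbubble_def Let_def ee unfolding e_def s_def by simp
  have "(\<mu> powr e * s powr (- e))\<^sup>2 = \<mu> powr (e + e) * s powr (- e - e)"
    by (simp add: power2_eq_square powr_add[symmetric] algebra_simps)
  also have "\<dots> = \<mu> powr (e + e) / s powr (e + e)"
  proof -
    have "- e - e = - (e + e)" by simp
    then show ?thesis by (simp only: powr_minus divide_inverse)
  qed
  also have "\<dots> = (\<mu> / s) powr (e + e)"
    using mu s by (simp add: powr_divide)
  finally have m: "(\<mu> powr e * s powr (- e))\<^sup>2 = (\<mu> / s) powr (e + e)" .
  have ee2: "e + e = real CARD('n) - 2" unfolding e_def by simp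
  have "(zbubble \<mu> \<xi> x)\<^sup>2 = (kappaN CARD('n))\<^sup>2 * (\<mu> powr e * s powr (- e))\<^sup>2"
    unfolding z by (simp only: power_mult_distrib mult.assoc)
  also have "\<dots> = (kappaN CARD('n))\<^sup>2 * (\<mu> / s) powr (real CARD('n) - 2)"
    unfolding m ee2 ..
  finally show ?thesis unfolding s_def .
qed

lemma zq:
  fixes \<xi> x :: "real^'n"
  assumes mu: "\<mu> > 0" and N: "CARD('n) > 2"
  shows "((zbubble \<mu> \<xi> x)\<^sup>2) powr (real CARD('n) / (real CARD('n) - 2))
       = ((kappaN CARD('n))\<^sup>2) powr (real CARD('n) / (real CARD('n) - 2)) * (\<mu> / (\<mu>\<^sup>2 + (norm (x - \<xi>))\<^sup>2)) ^ CARD('n)"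
proof -
  define y where "y = \<mu> / (\<mu>\<^sup>2 + (norm (x - \<xi>))\<^sup>2)"
  have y: "y > 0" unfolding y_def using mu by (simp add: add_pos_nonneg)
  define e where "e = real CARD('n) - 2"
  have e: "e > 0" unfolding e_def using N by simp
  have "((zbubble \<mu> \<xi> x)\<^sup>2) powr (real CARD('n) / e)
      = ((kappaN CARD('n))\<^sup>2 * y powr e) powr (real CARD('n) / e)"
    unfolding zsq[OF mu] y_def e_def ..
  also have "\<dots> = ((kappaN CARD('n))\<^sup>2) powr (real CARD('n) / e) * (y powr e) powr (real CARD('n) / e)"
    using y by (simp add: powr_mult)
  also have "(y powr e) powr (real CARD('n) / e) = y powr (real CARD('n))"
    using e by (simp add: powr_powr)
  also have "\<dots> = y ^ CARD('n)" using y by (simp add: powr_realpow)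
  finally show ?thesis unfolding y_def e_def .
qed

lemma tail_small:
  fixes g :: "'a::euclidean_space \<Rightarrow> real"
  assumes g: "integrable lborel g" and g0: "\<And>x. 0 \<le> g x" and eta: "\<eta> > 0"
  shows "\<exists>R\<ge>0. (LINT x|lborel. indicator (- cball 0 R) x * g x) < \<eta>"
proof -
  have gm[measurable]: "g \<in> borel_measurable lborel" using g by auto
  have "(\<lambda>i. LINT x|lborel. indicator (- cball 0 (real i)) x * g x) \<longlonglongrightarrow> (LINT (x::'a)|lborel. (0::real))"
  proof (rule integral_dominated_convergence[where w=g and f="\<lambda>x. 0" and s="\<lambda>i x. indicator (- cball 0 (real i)) x * g x"])
    show "AE x in lborel. (\<lambda>i. indicator (- cball 0 (real i)) x * g x) \<longlonglongrightarrow> 0"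
    proof (rule AE_I2)
      fix x :: 'a
      obtain n :: nat where "norm x \<le> real n" using real_arch_simple by blast
      have "\<forall>\<^sub>F i in sequentially. indicator (- cball 0 (real i)) x * g x = (0::real)"
        unfolding eventually_sequentially
        using \<open>norm x \<le> real n\<close> by (intro exI[of _ n]) (auto simp: indicator_def)
      then show "(\<lambda>i. indicator (- cball 0 (real i)) x * g x) \<longlonglongrightarrow> 0"
        by (rule tendsto_eventually)
    qed
    show "AE x in lborel. norm (indicator (- cball 0 (real i)) x * g x) \<le> g x" for i
      using g0 by (auto simp: indicator_def)
      show "(\<lambda>x. 0) \<in> borel_measurable lborel" by simp
    show "(\<lambda>x. indicator (- cball 0 (real i)) x * g x) \<in> borel_measurable lborel" for i
      by (intro borel_measurable_times borel_measurable_indicator gm) auto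
    show "integrable lborel g" by (rule g)
  qed
  then have "\<forall>\<^sub>F i in sequentially. (LINT x|lborel. indicator (- cball 0 (real i)) x * g x) < \<eta>"
    using eta by (simp add: order_tendstoD(2))
  then obtain i where "(LINT x|lborel. indicator (- cball 0 (real i)) x * g x) < \<eta>"
    unfolding eventually_sequentially by blast
  then show ?thesis by (intro exI[of _ "real i"]) auto
qed

lemma nn_inv_1_sq: "(\<integral>\<^sup>+s. ennreal (inverse (1 + s\<^sup>2)) \<partial>lborel) = ennreal pi"
proof -
  have i: "integrable lborel (\<lambda>s::real. inverse (1 + s\<^sup>2))"
    using integrable_inverse_1_plus_square by (simp add: set_integrable_def)
  have v: "(LINT s|lborel. inverse (1 + s\<^sup>2)) = pi"
    using LBINT_inverse_1_plus_square
    by (simp add: interval_lebesgue_integral_def set_lebesgue_integral_def)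
  show ?thesis using nn_integral_eq_integral[OF i] v by (simp add: add_pos_nonneg)
qed

lemma nn_cauchy:
  assumes mu: "\<mu> > (0::real)"
  shows "(\<integral>\<^sup>+s. ennreal (\<mu> / (\<mu>\<^sup>2 + (s - c)\<^sup>2)) \<partial>lborel) = ennreal pi"
proof -
  have "(\<integral>\<^sup>+s. ennreal (\<mu> / (\<mu>\<^sup>2 + (s - c)\<^sup>2)) \<partial>lborel)
      = \<bar>\<mu>\<bar> * (\<integral>\<^sup>+s. ennreal (\<mu> / (\<mu>\<^sup>2 + ((c + \<mu> * s) - c)\<^sup>2)) \<partial>lborel)"
    by (rule nn_integral_real_affine) (use mu in auto)
  also have "\<dots> = (\<integral>\<^sup>+s. ennreal \<mu> * ennreal (\<mu> / (\<mu>\<^sup>2 + ((c + \<mu> * s) - c)\<^sup>2)) \<partial>lborel)"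
    using mu by (simp add: nn_integral_cmult)
  also have "\<dots> = (\<integral>\<^sup>+s. ennreal (inverse (1 + s\<^sup>2)) \<partial>lborel)"
  proof (rule nn_integral_cong)
    fix s :: real
    have "\<mu> * (\<mu> / (\<mu>\<^sup>2 + ((c + \<mu> * s) - c)\<^sup>2)) = inverse (1 + s\<^sup>2)"
    proof -
      have d: "\<mu>\<^sup>2 + ((c + \<mu> * s) - c)\<^sup>2 = \<mu>\<^sup>2 * (1 + s\<^sup>2)"
        by (simp add: power2_eq_square algebra_simps)
      have aux: "\<mu> * (\<mu> / (\<mu>\<^sup>2 * t)) = inverse t" if "t > 0" for t
        using mu that by (simp add: power2_eq_square field_simps)
      show ?thesis unfolding d by (rule aux) (simp add: add_pos_nonneg)
    qed
    then show "ennreal \<mu> * ennreal (\<mu> / (\<mu>\<^sup>2 + ((c + \<mu> * s) - c)\<^sup>2)) = ennreal (inverse (1 + s\<^sup>2))"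
      using mu by (simp add: ennreal_mult'[symmetric])
  qed
  finally show ?thesis using nn_inv_1_sq by simp
qed

lemma cauchy_prod:
  fixes \<xi> :: "'a::euclidean_space"
  assumes mu: "\<mu> > (0::real)"
  shows "integrable lborel (\<lambda>x. \<Prod>b\<in>Basis. \<mu> / (\<mu>\<^sup>2 + ((x - \<xi>) \<bullet> b)\<^sup>2))"
    and "(LINT x|lborel. (\<Prod>b\<in>Basis. \<mu> / (\<mu>\<^sup>2 + ((x - \<xi>) \<bullet> b)\<^sup>2))) = pi ^ DIM('a)"
proof -
  have f0: "0 \<le> \<mu> / (\<mu>\<^sup>2 + (s - \<xi> \<bullet> b)\<^sup>2)" for b s
    using mu by (simp add: add_pos_nonneg less_imp_le)
  have eq: "(\<lambda>x. \<Prod>b\<in>Basis. \<mu> / (\<mu>\<^sup>2 + ((x - \<xi>) \<bullet> b)\<^sup>2)) = (\<lambda>x. \<Prod>b\<in>Basis. \<mu> / (\<mu>\<^sup>2 + (x \<bullet> b - \<xi> \<bullet> b)\<^sup>2))"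
    by (simp add: inner_diff_left)
  have "(\<integral>\<^sup>+x. ennreal (\<Prod>b\<in>Basis. \<mu> / (\<mu>\<^sup>2 + (x \<bullet> b - \<xi> \<bullet> b)\<^sup>2)) \<partial>lborel)
      = (\<integral>\<^sup>+x. (\<Prod>b\<in>Basis. ennreal (\<mu> / (\<mu>\<^sup>2 + (x \<bullet> b - \<xi> \<bullet> b)\<^sup>2))) \<partial>lborel)"
    by (intro nn_integral_cong prod_ennreal[symmetric]) (rule f0)
  also have "\<dots> = (\<Prod>b\<in>(Basis::'a set). (\<integral>\<^sup>+s. ennreal (\<mu> / (\<mu>\<^sup>2 + (s - \<xi> \<bullet> b)\<^sup>2)) \<partial>lborel))"
    by (rule nn_integral_lborel_prod[where f="\<lambda>b s. ennreal (\<mu> / (\<mu>\<^sup>2 + (s - \<xi> \<bullet> b)\<^sup>2))"])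
       (simp_all add: measurable_compose[OF _ measurable_ennreal])
  also have "\<dots> = (\<Prod>b\<in>(Basis::'a set). ennreal pi)"
    using nn_cauchy[OF mu] by simp
  also have "\<dots> = ennreal (pi ^ DIM('a))"
    by (simp add: ennreal_power)
  finally have nn: "(\<integral>\<^sup>+x. ennreal (\<Prod>b\<in>Basis. \<mu> / (\<mu>\<^sup>2 + (x \<bullet> b - \<xi> \<bullet> b)\<^sup>2)) \<partial>lborel) = ennreal (pi ^ DIM('a))" .
  have m: "(\<lambda>x. \<Prod>b\<in>Basis. \<mu> / (\<mu>\<^sup>2 + (x \<bullet> b - \<xi> \<bullet> b)\<^sup>2)) \<in> borel_measurable lborel"
    by measurable
  have p0: "0 \<le> (\<Prod>b\<in>Basis. \<mu> / (\<mu>\<^sup>2 + (x \<bullet> b - \<xi> \<bullet> b)\<^sup>2))" for x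
    by (intro prod_nonneg f0)
  have I: "integrable lborel (\<lambda>x. \<Prod>b\<in>Basis. \<mu> / (\<mu>\<^sup>2 + (x \<bullet> b - \<xi> \<bullet> b)\<^sup>2))"
    by (rule integrableI_nonneg[OF m]) (simp_all add: p0 nn)
  then show "integrable lborel (\<lambda>x. \<Prod>b\<in>Basis. \<mu> / (\<mu>\<^sup>2 + ((x - \<xi>) \<bullet> b)\<^sup>2))"
    unfolding eq .
  have "ennreal (LINT x|lborel. (\<Prod>b\<in>Basis. \<mu> / (\<mu>\<^sup>2 + (x \<bullet> b - \<xi> \<bullet> b)\<^sup>2))) = ennreal (pi ^ DIM('a))"
    using nn_integral_eq_integral[OF I] nn p0 by simp
  then have "(LINT x|lborel. (\<Prod>b\<in>Basis. \<mu> / (\<mu>\<^sup>2 + (x \<bullet> b - \<xi> \<bullet> b)\<^sup>2))) = pi ^ DIM('a)"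
    by (subst (asm) ennreal_inj) (auto intro!: integral_nonneg_AE simp: p0)
  then show "(LINT x|lborel. (\<Prod>b\<in>Basis. \<mu> / (\<mu>\<^sup>2 + ((x - \<xi>) \<bullet> b)\<^sup>2))) = pi ^ DIM('a)"
    unfolding eq .
qed

lemma div_le_self':
  fixes x c :: real
  assumes "x \<ge> 0" "c \<ge> 1" shows "x / c \<le> x"
proof -
  have "x / c \<le> x / 1" by (rule divide_left_mono) (use assms in auto)
  then show ?thesis by simp
qed

lemma young_pt:
  fixes a b w N :: real
  assumes a: "a \<ge> 0" and b: "b \<ge> 0" and wpos: "w > 0" and N: "N > 2"
  shows "a * b \<le> w powr (-(N/2)) * a powr (N/2) + w powr (N/(N-2)) * b powr (N/(N-2))"
proof -
  have "a * b = (a / w) * (w * b)" using wpos by simp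
  also have "\<dots> \<le> (a / w) powr (N/2) / (N/2) + (w * b) powr (N/(N-2)) / (N/(N-2))"
  proof (rule Youngs_inequality)
    show "1 < N / 2" using N by simp
    show "1 < N / (N - 2)" using N by simp
    show "1 / (N / 2) + 1 / (N / (N - 2)) = 1" using N by (simp add: field_simps)
    show "0 \<le> a / w" using a wpos by simp
    show "0 \<le> w * b" using b wpos by simp
  qed
  also have "\<dots> \<le> (a / w) powr (N/2) + (w * b) powr (N/(N-2))"
  proof (rule add_mono)
    show "(a / w) powr (N/2) / (N/2) \<le> (a / w) powr (N/2)"
    proof (rule div_le_self')
      show "0 \<le> (a / w) powr (N/2)" by simp
      show "1 \<le> N / 2" using N by simp
    qed
  next
    show "(w * b) powr (N/(N-2)) / (N/(N-2)) \<le> (w * b) powr (N/(N-2))"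
    proof (rule div_le_self')
      show "0 \<le> (w * b) powr (N/(N-2))" by simp
      show "1 \<le> N / (N-2)" using N by simp
    qed
  qed
  also have "\<dots> = w powr (-(N/2)) * a powr (N/2) + w powr (N/(N-2)) * b powr (N/(N-2))"
  proof -
    have 1: "(a / w) powr (N/2) = w powr (-(N/2)) * a powr (N/2)"
      using a wpos by (simp add: powr_divide powr_minus_divide)
    have 2: "(w * b) powr (N/(N-2)) = w powr (N/(N-2)) * b powr (N/(N-2))"
      using b wpos by (simp add: powr_mult)
    show ?thesis unfolding 1 2 ..
  qed
  finally show ?thesis .
qed


lemma sq_powr_half:
  fixes x :: real assumes "x \<ge> 0" "N > 0"
  shows "(x\<^sup>2) powr (real N / 2) = x ^ N"
proof (cases "x = 0")
  case True then show ?thesis using assms by simp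
next
  case False
  then have x: "x > 0" using assms by simp
  have "(x\<^sup>2) powr (real N / 2) = (x powr 2) powr (real N / 2)"
    using x by (simp add: powr_realpow)
  also have "\<dots> = x powr (real N)" by (simp add: powr_powr)
  also have "\<dots> = x ^ N" using x by (simp add: powr_realpow)
  finally show ?thesis .
qed

lemma prod_bound:
  fixes v :: "real^'n"
  assumes mu: "\<mu> > 0"
  shows "(\<mu> / (\<mu>\<^sup>2 + (norm v)\<^sup>2)) ^ CARD('n) \<le> (\<Prod>b\<in>Basis. \<mu> / (\<mu>\<^sup>2 + (v \<bullet> b)\<^sup>2))"
proof -
  have c: "card (Basis :: (real^'n) set) = CARD('n)" by simp
  have "(\<mu> / (\<mu>\<^sup>2 + (norm v)\<^sup>2)) ^ CARD('n) = (\<Prod>b\<in>(Basis :: (real^'n) set). \<mu> / (\<mu>\<^sup>2 + (norm v)\<^sup>2))"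
    by (simp only: prod_constant c)
  also have "\<dots> \<le> (\<Prod>b\<in>Basis. \<mu> / (\<mu>\<^sup>2 + (v \<bullet> b)\<^sup>2))"
  proof (rule prod_mono)
    fix b :: "real^'n" assume b: "b \<in> Basis"
    have "\<bar>v \<bullet> b\<bar> \<le> norm v" using b by (rule Basis_le_norm)
    then have "(v \<bullet> b)\<^sup>2 \<le> (norm v)\<^sup>2"
      by (metis abs_ge_zero power2_abs power_mono)
    then have "\<mu> / (\<mu>\<^sup>2 + (norm v)\<^sup>2) \<le> \<mu> / (\<mu>\<^sup>2 + (v \<bullet> b)\<^sup>2)"
      using mu by (intro divide_left_mono) (auto simp: add_pos_nonneg)
    moreover have "0 \<le> \<mu> / (\<mu>\<^sup>2 + (norm v)\<^sup>2)" using mu by simp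
    ultimately show "0 \<le> \<mu> / (\<mu>\<^sup>2 + (norm v)\<^sup>2) \<and> \<mu> / (\<mu>\<^sup>2 + (norm v)\<^sup>2) \<le> \<mu> / (\<mu>\<^sup>2 + (v \<bullet> b)\<^sup>2)"
      by simp
  qed
  finally show ?thesis .
qed

lemma inside_bound:
  fixes x \<xi> :: "real^'n"
  assumes mu: "\<mu> > 0" and x: "norm x \<le> R" and D: "\<mu> + norm \<xi> - R > 0"
  shows "\<mu> / (\<mu>\<^sup>2 + (norm (x - \<xi>))\<^sup>2) \<le> 2 / (\<mu> + norm \<xi> - R)"
proof -
  define d where "d = norm (x - \<xi>)"
  have d0: "d \<ge> 0" unfolding d_def by simp
  have dge: "d \<ge> norm \<xi> - R"
    unfolding d_def using norm_triangle_ineq3[of \<xi> x] x by (simp add: norm_minus_commute)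
  have s: "\<mu>\<^sup>2 + d\<^sup>2 > 0" using mu by (simp add: add_pos_nonneg)
  have "\<mu> * (\<mu> + norm \<xi> - R) \<le> \<mu> * (\<mu> + d)" using dge mu by simp
  also have "\<dots> \<le> 2 * (\<mu>\<^sup>2 + d\<^sup>2)"
  proof -
    have h: "0 \<le> (\<mu> - d)\<^sup>2 + \<mu> * d + d\<^sup>2" using mu d0 by (simp add: add_nonneg_nonneg)
    have e: "2 * (\<mu>\<^sup>2 + d\<^sup>2) - \<mu> * (\<mu> + d) = (\<mu> - d)\<^sup>2 + \<mu> * d + d\<^sup>2"
      by (simp add: power2_eq_square algebra_simps)
    show ?thesis using h e by linarith
  qed
  finally have "\<mu> * (\<mu> + norm \<xi> - R) \<le> 2 * (\<mu>\<^sup>2 + d\<^sup>2)" .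
  then show ?thesis unfolding d_def[symmetric] using s D by (simp add: divide_simps mult.commute)
qed

lemma powr_le_self:
  fixes y e :: real assumes "0 \<le> y" "y \<le> 1" "e \<ge> 1"
  shows "y powr e \<le> y"
proof (cases "y = 0")
  case False
  then have "y powr e \<le> y powr 1" using assms by (intro powr_mono') auto
  then show ?thesis using False assms by simp
qed simp

lemma zbubble_measurable[measurable]: "(\<lambda>x. zbubble \<mu> \<xi> x) \<in> borel_measurable borel"
  unfolding zbubble_def Let_def by measurable

theorem mainTheorem10:
  fixes A :: "real^'n \<Rightarrow> real^'n" and r :: real
  assumes "CARD('n) > 4"
    and "C1_on_UNIV A"
    and "bounded (range A)"
    and "1 < r" and "r < real CARD('n)"
    and "integrable lborel (\<lambda>x. norm (A x) powr r)"
  shows "\<forall>\<epsilon>>0. \<exists>R. \<forall>\<mu>>0. \<forall>\<xi>. \<mu> + norm \<xi> > R \<longrightarrow> \<bar>H2 A \<mu> \<xi>\<bar> < \<epsilon>"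
proof (intro allI impI)
  fix \<epsilon> :: real assume eps: "\<epsilon> > 0"
  note N4 = assms(1)
  define N where "N = CARD('n)"
  have N2: "real N > 2" and N0: "N > 0" using N4 unfolding N_def by auto
  define k where "k = kappaN N"
  define q where "q = real N / (real N - 2)"
  define p where "p = real N / 2"
  have contA: "continuous_on UNIV A"
  proof -
    obtain D :: "real^'n \<Rightarrow> ((real^'n, real^'n) blinfun)" where
      D: "\<And>x. (A has_derivative blinfun_apply (D x)) (at x)"
      using assms(2) unfolding C1_on_UNIV_def by blast
    show ?thesis
      by (intro continuous_at_imp_continuous_on ballI has_derivative_continuous[OF D])
  qed
  have Am[measurable]: "A \<in> borel_measurable borel"
    by (rule borel_measurable_continuous_onI[OF contA])
  obtain M0 where M0: "\<And>x. norm (A x) \<le> M0"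
    using assms(3) unfolding bounded_iff by blast
  define M where "M = max M0 1"
  have M: "\<And>x. norm (A x) \<le> M"
    using M0 unfolding M_def by (meson max.coboundedI1)
  have Mpos: "M > 0" unfolding M_def by simp
  define g where "g x = norm (A x) ^ N" for x
  have gm[measurable]: "g \<in> borel_measurable lborel" unfolding g_def by measurable
  have g0: "\<And>x. 0 \<le> g x" unfolding g_def by simp
  have gint: "integrable lborel g"
  proof (rule Bochner_Integration.integrable_bound)
    show "integrable lborel (\<lambda>x. M powr (real N - r) * norm (A x) powr r)"
      using assms(6) by (rule integrable_mult_right)
    show "g \<in> borel_measurable lborel" by (rule gm)
    show "AE x in lborel. norm (g x) \<le> norm (M powr (real N - r) * norm (A x) powr r)"
    proof (rule AE_I2)
      fix x
      show "norm (g x) \<le> norm (M powr (real N - r) * norm (A x) powr r)"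
      proof (cases "A x = 0")
        case True then show ?thesis using N0 unfolding g_def by (simp add: power_0_left)
      next
        case False
        then have a: "norm (A x) > 0" by simp
        have "g x = norm (A x) powr (real N)" unfolding g_def using a by (simp add: powr_realpow)
        also have "\<dots> = norm (A x) powr (real N - r) * norm (A x) powr r"
          by (simp add: powr_add[symmetric])
        also have "\<dots> \<le> M powr (real N - r) * norm (A x) powr r"
          using assms(5) M[of x] unfolding N_def by (intro mult_right_mono powr_mono2) auto
        finally show ?thesis using g0[of x] by simp
      qed
    qed
  qed
  have kpos: "k > 0" unfolding k_def kappaN_def using N2 by simp
  define K where "K = (k\<^sup>2) powr q * pi ^ N"
  have K0: "K \<ge> 0" unfolding K_def by simp
  define w where "w = (\<epsilon> / (2 * (K + 1))) powr (1 / q)"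
  have q1: "q > 1" unfolding q_def using N2 by simp
  have wpos: "w > 0" unfolding w_def using eps K0 by simp
  have wq: "w powr q = \<epsilon> / (2 * (K + 1))"
    unfolding w_def using q1 eps K0 by (simp add: powr_powr)
  have wp: "w powr (- p) > 0" using wpos by simp
  obtain R0 where R0: "R0 \<ge> 0"
    and tail: "(LINT x|lborel. indicator (- cball (0::real^'n) R0) x * g x) < \<epsilon> / (2 * w powr (- p))"
    using tail_small[OF gint g0, of "\<epsilon> / (2 * w powr (- p))"] eps wp by auto
  define V where "V = measure lborel (cball (0::real^'n) R0)"
  have V0: "V \<ge> 0" unfolding V_def by simp
  define c0 where "c0 = M\<^sup>2 * k\<^sup>2 * V"
  have c00: "c0 \<ge> 0" unfolding c0_def using V0 by simp
  define T where "T = R0 + 2 + 4 * (c0 + 1) / \<epsilon>"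
  show "\<exists>R. \<forall>\<mu>>0. \<forall>\<xi>. \<mu> + norm \<xi> > R \<longrightarrow> \<bar>H2 A \<mu> \<xi>\<bar> < \<epsilon>"
  proof (intro exI[of _ T] allI impI)
    fix \<mu> :: real and \<xi> :: "real^'n"
    assume mu: "\<mu> > 0" and big: "\<mu> + norm \<xi> > T"
    define D where "D = \<mu> + norm \<xi> - R0"
    have Dbig: "D > 2 + 4 * (c0 + 1) / \<epsilon>" using big unfolding D_def T_def by simp
    have "4 * (c0 + 1) / \<epsilon> \<ge> 0" using eps c00 by simp
    then have D2: "D > 2" using Dbig by linarith
    then have Dpos: "D > 0" by simp
    define \<rho> where "\<rho> = 2 / D"
    have rho0: "\<rho> > 0" and rho1: "\<rho> < 1" unfolding \<rho>_def using D2 by auto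
    have rho_small: "c0 * \<rho> < \<epsilon> / 2"
    proof -
      have "4 * (c0 + 1) / \<epsilon> < D" using Dbig by simp
      then have "4 * (c0 + 1) < D * \<epsilon>" using eps by (simp add: divide_simps)
      then have "(c0 + 1) * \<rho> < \<epsilon> / 2" unfolding \<rho>_def using Dpos by (simp add: divide_simps mult.commute)
      moreover have "c0 * \<rho> \<le> (c0 + 1) * \<rho>" using rho0 by simp
      ultimately show ?thesis by linarith
    qed
    define P where "P x = (\<Prod>b\<in>Basis. \<mu> / (\<mu>\<^sup>2 + ((x - \<xi>) \<bullet> b)\<^sup>2))" for x
    have Pint: "integrable lborel P" unfolding P_def by (rule cauchy_prod(1)[OF mu])
    have PI: "(LINT x|lborel. P x) = pi ^ N" unfolding P_def N_def using cauchy_prod(2)[OF mu, of \<xi>] by simp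
    have P0: "P x \<ge> 0" for x unfolding P_def using mu by (intro prod_nonneg) (simp add: add_pos_nonneg less_imp_le)
    define F where "F x = (norm (A x))\<^sup>2 * (zbubble \<mu> \<xi> x)\<^sup>2" for x
    have Fm: "F \<in> borel_measurable lborel" unfolding F_def by measurable
    have F0: "F x \<ge> 0" for x unfolding F_def by simp
    define G where "G x = indicator (cball (0::real^'n) R0) x * (M\<^sup>2 * k\<^sup>2 * \<rho>)
        + w powr (- p) * (indicator (- cball (0::real^'n) R0) x * g x) + w powr q * ((k\<^sup>2) powr q * P x)" for x
    have Vfin: "emeasure lborel (cball (0::real^'n) R0) < \<infinity>" by (rule emeasure_lborel_cball_finite)
    have i1: "integrable lborel (\<lambda>x. indicator (cball (0::real^'n) R0) x * (M\<^sup>2 * k\<^sup>2 * \<rho>))"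
      using Vfin by (intro integrable_mult_left integrable_real_indicator) auto
    have i2: "integrable lborel (\<lambda>x. indicator (- cball (0::real^'n) R0) x * g x)"
      by (rule Bochner_Integration.integrable_bound[OF gint]) (auto simp: indicator_def g0)
    have Gint: "integrable lborel G"
      unfolding G_def using i1 i2 Pint by (intro Bochner_Integration.integrable_add integrable_mult_right) auto
    have ib: "integrable lborel (\<lambda>x. w powr (- p) * (indicator (- cball (0::real^'n) R0) x * g x))"
      using i2 by (rule integrable_mult_right)
    have ic: "integrable lborel (\<lambda>x. w powr q * ((k\<^sup>2) powr q * P x))"
      using Pint by (intro integrable_mult_right)
    have "(LINT x|lborel. G x) = (LINT x|lborel. indicator (cball (0::real^'n) R0) x * (M\<^sup>2 * k\<^sup>2 * \<rho>)
        + w powr (- p) * (indicator (- cball (0::real^'n) R0) x * g x)) + (LINT x|lborel. w powr q * ((k\<^sup>2) powr q * P x))"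
      unfolding G_def by (rule Bochner_Integration.integral_add[OF Bochner_Integration.integrable_add[OF i1 ib] ic])
    also have "(LINT x|lborel. indicator (cball (0::real^'n) R0) x * (M\<^sup>2 * k\<^sup>2 * \<rho>)
        + w powr (- p) * (indicator (- cball (0::real^'n) R0) x * g x)) = (LINT x|lborel. indicator (cball (0::real^'n) R0) x * (M\<^sup>2 * k\<^sup>2 * \<rho>))
        + (LINT x|lborel. w powr (- p) * (indicator (- cball (0::real^'n) R0) x * g x))"
      by (rule Bochner_Integration.integral_add[OF i1 ib])
    also have "(LINT x|lborel. indicator (cball (0::real^'n) R0) x * (M\<^sup>2 * k\<^sup>2 * \<rho>)) = c0 * \<rho>"
      unfolding c0_def V_def by simp
    also have "(LINT x|lborel. w powr (- p) * (indicator (- cball (0::real^'n) R0) x * g x))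
        = w powr (- p) * (LINT x|lborel. indicator (- cball (0::real^'n) R0) x * g x)" by simp
    also have "(LINT x|lborel. w powr q * ((k\<^sup>2) powr q * P x)) = w powr q * ((k\<^sup>2) powr q * pi ^ N)"
      by (simp add: PI)
    finally have GI: "(LINT x|lborel. G x) = c0 * \<rho> + w powr (- p) * (LINT x|lborel. indicator (- cball (0::real^'n) R0) x * g x)
         + w powr q * ((k\<^sup>2) powr q * pi ^ N)" .
    have FG: "F x \<le> G x" for x
    proof (cases "norm x \<le> R0")
      case True
      define y where "y = \<mu> / (\<mu>\<^sup>2 + (norm (x - \<xi>))\<^sup>2)"
      have y0: "y \<ge> 0" unfolding y_def using mu by simp
      have yr: "y \<le> \<rho>" unfolding y_def \<rho>_def D_def by (rule inside_bound[OF mu True]) (use Dpos D_def in simp)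
      have "y powr (real N - 2) \<le> y" using y0 yr rho1 N2 by (intro powr_le_self) auto
      then have z2: "(zbubble \<mu> \<xi> x)\<^sup>2 \<le> k\<^sup>2 * \<rho>"
        using zsq[OF mu, of \<xi> x] yr unfolding y_def[symmetric] k_def N_def
        by (smt (verit) kpos k_def mult_left_mono zero_le_power2 N_def)
      have "F x \<le> M\<^sup>2 * (k\<^sup>2 * \<rho>)"
        unfolding F_def using z2 M[of x] by (intro mult_mono power_mono) auto
      moreover have "G x \<ge> M\<^sup>2 * k\<^sup>2 * \<rho>"
        unfolding G_def using True wp P0[of x] g0[of x] wpos by (simp add: indicator_def)
      ultimately show ?thesis by (simp add: mult_ac)
    next
      case False
      have "F x \<le> w powr (- p) * ((norm (A x))\<^sup>2) powr p + w powr q * ((zbubble \<mu> \<xi> x)\<^sup>2) powr q"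
        unfolding F_def p_def q_def using young_pt[OF _ _ wpos N2] by simp
      also have "((norm (A x))\<^sup>2) powr p = g x"
        unfolding p_def g_def using N0 by (simp add: sq_powr_half)
      also have "((zbubble \<mu> \<xi> x)\<^sup>2) powr q = (k\<^sup>2) powr q * (\<mu> / (\<mu>\<^sup>2 + (norm (x - \<xi>))\<^sup>2)) ^ N"
        unfolding q_def k_def N_def using zq[OF mu] N2 N_def by simp
      also have "\<dots> \<le> (k\<^sup>2) powr q * P x"
        unfolding P_def N_def by (intro mult_left_mono prod_bound mu) simp
      finally have "F x \<le> w powr (- p) * g x + w powr q * ((k\<^sup>2) powr q * P x)"
        using wpos by (simp add: mult_left_mono)
      then show ?thesis unfolding G_def using False by (simp add: indicator_def)
    qed
    have Fint: "integrable lborel F"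
      by (rule Bochner_Integration.integrable_bound[OF Gint Fm]) (intro AE_I2, use FG F0 in \<open>auto intro: order_trans[OF _ abs_ge_self]\<close>)
    have "(LINT x|lborel. F x) \<le> (LINT x|lborel. G x)"
      by (rule integral_mono[OF Fint Gint FG])
    also have "\<dots> < \<epsilon> / 2 + \<epsilon> / 2 + \<epsilon> / 2"
    proof -
      have t2: "w powr (- p) * (LINT x|lborel. indicator (- cball (0::real^'n) R0) x * g x) < \<epsilon> / 2"
        using tail wp by (simp add: divide_simps mult.commute)
      have t3: "w powr q * ((k\<^sup>2) powr q * pi ^ N) < \<epsilon> / 2"
      proof -
        have "w powr q * ((k\<^sup>2) powr q * pi ^ N) = \<epsilon> / (2 * (K + 1)) * K"
          unfolding wq K_def ..
        also have "\<dots> < \<epsilon> / 2" using eps K0 by (simp add: divide_simps)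
        finally show ?thesis .
      qed
      show ?thesis unfolding GI using rho_small t2 t3 by linarith
    qed
    finally have Flt: "(LINT x|lborel. F x) < 3 * \<epsilon> / 2" by simp
    have Fge: "(LINT x|lborel. F x) \<ge> 0" by (rule integral_nonneg_AE) (simp add: F0)
    have H: "H2 A \<mu> \<xi> = (1/2) * (LINT x|lborel. F x)" unfolding H2_def F_def ..
    show "\<bar>H2 A \<mu> \<xi>\<bar> < \<epsilon>" unfolding H using Flt Fge eps by simp
  qed
qed
end
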